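(* Let $\eta>0$ be such that $\frac{1}{2\eta}$ and $\beta:=\frac{\eta}{300}T$ are integers, and let $\alpha:=\frac{100}{\eta}$ (assumed integer), so $T=3\alpha\beta$. Consider $K+1=3$ actions and the reward sequence consisting of $\beta$ identical batches; batch $i\in[\beta]$ consists of $\alpha$ rounds with reward vector $(1,1,0)$ (rounds $(i-1)3\alpha+1,\dots,(i-1)3\alpha+\alpha$), then $\alpha$ rounds with $(0,1,0)$, then $\alpha$ rounds with $(0,0,1)$. Then agile online gradient ascent with step size $\eta$ incurs swap regret $\Omega(T)$ on this sequence.
   Context: Agile online gradient ascent with step size $\eta$ on $K+1$ actions: $\boldsymbol{\pi}^{(1)}=(\frac{1}{K+1},\dots,\frac{1}{K+1})$; in round $t$ it plays the distribution $\boldsymbol{\pi}^{(t)}$, observes reward vector $\mathbf{r}^{(t)}$, and sets $\boldsymbol{\pi}^{(t+1)}:=\arg\min_{\boldsymbol{\pi}\in\Delta([K+1])}\|\boldsymbol{\pi}-(\boldsymbol{\pi}^{(t)}+\eta\mathbf{r}^{(t)})\|_2$, where $\Delta([K+1])$ is the probability simplex. The swap regret of an algorithm playing $\boldsymbol{\pi}^{(t)}$ against rewards $\mathbf{r}^{(t)}$ is $\max_{\phi:[K+1]\to[K+1]}\sum_{t\in[T]}\sum_{k\in[K+1]}\pi^{(t)}_k\big(r^{(t)}_{\phi(k)}-r^{(t)}_k\big)$. *)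

theory Defs
  imports "HOL-Analysis.Analysis"
begin

definition prob_simplex :: "(real^'n::finite) set" where
  "prob_simplex = {p. (\<forall>k. 0 \<le> p $ k) \<and> (\<Sum>k\<in>UNIV. p $ k) = 1}"

definition proj_simplex :: "real^'n::finite \<Rightarrow> real^'n" where
  "proj_simplex y = (SOME p. p \<in> prob_simplex \<and> (\<forall>q\<in>prob_simplex. norm (p - y) \<le> norm (q - y)))"

definition uniform_dist :: "real^'n::finite" where
  "uniform_dist = (\<chi> k. 1 / real CARD('n))"

text \<open>Agile online gradient ascent; rounds are indexed from 0, so agile_oga eta r t
  is the distribution played in round t+1 of the paper, and r t is the reward of that round.\<close>
primrec agile_oga :: "real \<Rightarrow> (nat \<Rightarrow> real^'n::finite) \<Rightarrow> nat \<Rightarrow> real^'n" where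
  "agile_oga eta r 0 = uniform_dist"
| "agile_oga eta r (Suc t) = proj_simplex (agile_oga eta r t + eta *\<^sub>R r t)"

definition swap_regret :: "nat \<Rightarrow> (nat \<Rightarrow> real^'n::finite) \<Rightarrow> (nat \<Rightarrow> real^'n) \<Rightarrow> real" where
  "swap_regret T play r =
     Max (range (\<lambda>\<phi> :: 'n \<Rightarrow> 'n.
        \<Sum>t<T. \<Sum>k\<in>UNIV. play t $ k * (r t $ (\<phi> k) - r t $ k)))"

definition hard_rewards :: "nat \<Rightarrow> nat \<Rightarrow> real^3" where
  "hard_rewards alpha t =
     (if t mod (3 * alpha) < alpha then vector [1, 1, 0]
      else if t mod (3 * alpha) < 2 * alpha then vector [0, 1, 0]
      else vector [0, 0, 1])"

end

theory Submission
  imports Defs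
begin

lemma nsq: "norm ((a::'a::real_inner) + b)^2 = norm a^2 + 2 * inner a b + norm b^2"
  by (simp add: power2_norm_eq_inner inner_add_left inner_add_right inner_commute)

lemma proj_char:
  fixes p y :: "real^'n::finite"
  assumes ps: "p \<in> prob_simplex" and h1: "\<forall>k. p$k = 0 \<or> p$k = y$k - \<tau>"
    and h2: "\<forall>k. y$k - \<tau> \<le> p$k"
  shows "proj_simplex y = p"
proof -
  have key: "norm (p - y) < norm (q - y)" if q: "q \<in> prob_simplex" "q \<noteq> p" for q
  proof -
    have "inner (q - p) (p - y) = (\<Sum>k\<in>UNIV. (q$k - p$k) * (p$k - y$k))"
      by (simp add: inner_vec_def)
    also have "\<dots> \<ge> (\<Sum>k\<in>UNIV. (q$k - p$k) * (-\<tau>))"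
    proof (rule sum_mono)
      fix k
      have "q$k \<ge> 0" using q(1) by (simp add: prob_simplex_def)
      show "(q$k - p$k) * (-\<tau>) \<le> (q$k - p$k) * (p$k - y$k)"
      proof (cases "p$k = 0")
        case True
        then have "y$k \<le> \<tau>" using h2[rule_format, of k] by simp
        then show ?thesis using True \<open>q$k \<ge> 0\<close> by (simp add: mult_left_mono)
      next
        case False
        then have "p$k = y$k - \<tau>" using h1 by blast
        then show ?thesis by simp
      qed
    qed
    also have "(\<Sum>k\<in>UNIV. (q$k - p$k) * (-\<tau>)) = (\<Sum>k\<in>UNIV. (q$k - p$k)) * (-\<tau>)"
      by (rule sum_distrib_right[symmetric])
    also have "(\<Sum>k\<in>UNIV. (q$k - p$k)) = (\<Sum>k\<in>UNIV. q$k) - (\<Sum>k\<in>UNIV. p$k)"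
      by (rule sum_subtractf)
    finally have i1: "inner (q - p) (p - y) \<ge> ((\<Sum>k\<in>UNIV. q$k) - (\<Sum>k\<in>UNIV. p$k)) * (-\<tau>)" .
    have "(\<Sum>k\<in>UNIV. q$k) = 1" "(\<Sum>k\<in>UNIV. p$k) = 1" using q(1) ps by (auto simp: prob_simplex_def)
    with i1 have i: "inner (q - p) (p - y) \<ge> 0" by simp
    have e: "norm (q - y)^2 = norm (q - p)^2 + 2 * inner (q - p) (p - y) + norm (p - y)^2"
    proof -
      have "q - y = (q - p) + (p - y)" by simp
      then have "norm (q - y)^2 = norm ((q - p) + (p - y))^2" by simp
      also have "\<dots> = norm (q - p)^2 + 2 * inner (q - p) (p - y) + norm (p - y)^2"
        by (rule nsq)
      finally show ?thesis .
    qed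
    have "norm (q - p) > 0" using q(2) by simp
    then have "norm (p - y)^2 < norm (q - y)^2" using e i by (smt (verit) zero_less_power)
    then show ?thesis by (meson norm_ge_zero power_less_imp_less_base)
  qed
  show ?thesis unfolding proj_simplex_def
  proof (rule some_equality)
    show "p \<in> prob_simplex \<and> (\<forall>q\<in>prob_simplex. norm (p - y) \<le> norm (q - y))"
      using ps key by (metis order_refl less_imp_le)
  next
    fix p' assume "p' \<in> prob_simplex \<and> (\<forall>q\<in>prob_simplex. norm (p' - y) \<le> norm (q - y))"
    then show "p' = p" using key ps by (meson not_le)
  qed
qed

definition vA :: "real \<Rightarrow> real^3" where "vA a = vector [a, a, 1 - 2*a]"
definition vB :: "real \<Rightarrow> real^3" where "vB b = vector [b, 1 - b, 0]"
definition vC :: "real \<Rightarrow> real^3" where "vC c = vector [0, 1 - c, c]"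

lemma simplex3: "(v::real^3) \<in> prob_simplex \<longleftrightarrow> v$1 \<ge> 0 \<and> v$2 \<ge> 0 \<and> v$3 \<ge> 0 \<and> v$1 + v$2 + v$3 = 1"
  by (simp add: prob_simplex_def forall_3 sum_3)

lemma stepA: assumes "eta > 0" "0 \<le> a" "a \<le> 1/2"
  shows "proj_simplex (vA a + eta *\<^sub>R vector [1,1,0]) = vA (min (1/2) (a + eta/3))"
proof (cases "a + eta/3 \<le> 1/2")
  case True
  show ?thesis
    by (rule proj_char[where \<tau>="2*eta/3"]) (use assms True in \<open>auto simp: simplex3 vA_def forall_3\<close>)
next
  case False
  show ?thesis
    by (rule proj_char[where \<tau>="a + eta - 1/2"]) (use assms False in \<open>auto simp: simplex3 vA_def forall_3\<close>)
qed

lemma stepB: assumes "eta > 0" "0 \<le> b" "b \<le> 1"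
  shows "proj_simplex (vB b + eta *\<^sub>R vector [0,1,0]) = vB (max 0 (b - eta/2))"
proof (cases "b \<ge> eta/2")
  case True
  show ?thesis
    by (rule proj_char[where \<tau>="eta/2"]) (use assms True in \<open>auto simp: simplex3 vB_def forall_3\<close>)
next
  case False
  show ?thesis
    by (rule proj_char[where \<tau>="eta - b"]) (use assms False in \<open>auto simp: simplex3 vB_def forall_3\<close>)
qed

lemma stepC: assumes "eta > 0" "0 \<le> c" "c \<le> 1"
  shows "proj_simplex (vC c + eta *\<^sub>R vector [0,0,1]) = vC (min 1 (c + eta/2))"
proof (cases "c + eta/2 \<le> 1")
  case True
  show ?thesis
    by (rule proj_char[where \<tau>="eta/2"]) (use assms True in \<open>auto simp: simplex3 vC_def forall_3\<close>)
next
  case False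
  show ?thesis
    by (rule proj_char[where \<tau>="c + eta - 1"]) (use assms False in \<open>auto simp: simplex3 vC_def forall_3\<close>)
qed


lemma hr_mod: "j < 3*alpha \<Longrightarrow> hard_rewards alpha (3*alpha*i + j) = hard_rewards alpha j"
  unfolding hard_rewards_def by simp

lemma hrA: "j < alpha \<Longrightarrow> hard_rewards alpha (3*alpha*i + j) = vector [1,1,0]"
  by (subst hr_mod) (auto simp: hard_rewards_def)

lemma hrB: "j < alpha \<Longrightarrow> hard_rewards alpha (3*alpha*i + alpha + j) = vector [0,1,0]"
  using hr_mod[of "alpha + j" alpha i] by (auto simp: hard_rewards_def add.assoc)

lemma hrC: "j < alpha \<Longrightarrow> hard_rewards alpha (3*alpha*i + alpha + alpha + j) = vector [0,0,1]"
  using hr_mod[of "alpha + alpha + j" alpha i] by (auto simp: hard_rewards_def add.assoc)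

lemma hrC': "j < alpha \<Longrightarrow> hard_rewards alpha (2*alpha + 3*alpha*i + j) = vector [0,0,1]"
  using hrC[of j alpha i] by simp

lemma minmin: "e \<ge> 0 \<Longrightarrow> min (h::real) (min h x + e) = min h (x + e)"
  by auto
lemma maxmax: "e \<ge> 0 \<Longrightarrow> max (0::real) (max 0 x - e) = max 0 (x - e)"
  by auto

lemma phaseA:
  assumes "eta > 0" "0 \<le> a" "a \<le> 1/2" "agile_oga eta r s = vA a"
    "\<forall>j<n. r (s + j) = vector [1,1,0]"
  shows "j \<le> n \<Longrightarrow> agile_oga eta r (s + j) = vA (min (1/2) (a + real j * eta / 3))"
proof (induction j)
  case 0
  then show ?case using assms by simp
next
  case (Suc j)
  then have "agile_oga eta r (s + Suc j) = proj_simplex (vA (min (1/2) (a + real j * eta / 3)) + eta *\<^sub>R vector [1,1,0])"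
    using assms(5) by simp
  also have "\<dots> = vA (min (1/2) (min (1/2) (a + real j * eta / 3) + eta/3))"
    using assms(1) by (intro stepA) (use assms in \<open>auto simp: min_def max_def intro!: mult_nonneg_nonneg\<close>)
  also have "\<dots> = vA (min (1/2) (a + real (Suc j) * eta / 3))"
    using assms(1) by (subst minmin) (auto simp: algebra_simps add_divide_distrib)
  finally show ?case .
qed

lemma phaseB:
  assumes "eta > 0" "0 \<le> b" "b \<le> 1" "agile_oga eta r s = vB b"
    "\<forall>j<n. r (s + j) = vector [0,1,0]"
  shows "j \<le> n \<Longrightarrow> agile_oga eta r (s + j) = vB (max 0 (b - real j * eta / 2))"
proof (induction j)
  case 0
  then show ?case using assms by simp
next
  case (Suc j)
  then have "agile_oga eta r (s + Suc j) = proj_simplex (vB (max 0 (b - real j * eta / 2)) + eta *\<^sub>R vector [0,1,0])"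
    using assms(5) by simp
  also have "\<dots> = vB (max 0 (max 0 (b - real j * eta / 2) - eta/2))"
  proof -
    have nn: "0 \<le> real j * eta" using assms(1) by simp
    have "b - real j*eta/2 \<le> 1" using nn assms(3) by linarith
    then have "max 0 (b - real j*eta/2) \<le> 1" by simp
    then show ?thesis by (intro stepB) (use assms in auto)
  qed
  also have "\<dots> = vB (max 0 (b - real (Suc j) * eta / 2))"
    using assms(1) by (subst maxmax) (auto simp: algebra_simps add_divide_distrib diff_divide_distrib)
  finally show ?case .
qed

lemma phaseC:
  assumes "eta > 0" "0 \<le> c" "c \<le> 1" "agile_oga eta r s = vC c"
    "\<forall>j<n. r (s + j) = vector [0,0,1]"
  shows "j \<le> n \<Longrightarrow> agile_oga eta r (s + j) = vC (min 1 (c + real j * eta / 2))"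
proof (induction j)
  case 0
  then show ?case using assms by simp
next
  case (Suc j)
  then have "agile_oga eta r (s + Suc j) = proj_simplex (vC (min 1 (c + real j * eta / 2)) + eta *\<^sub>R vector [0,0,1])"
    using assms(5) by simp
  also have "\<dots> = vC (min 1 (min 1 (c + real j * eta / 2) + eta/2))"
    using assms(1) by (intro stepC) (use assms in \<open>auto simp: min_def max_def intro!: mult_nonneg_nonneg\<close>)
  also have "\<dots> = vC (min 1 (c + real (Suc j) * eta / 2))"
    using assms(1) by (subst minmin) (auto simp: algebra_simps add_divide_distrib)
  finally show ?case .
qed

lemma vAB: "vA (1/2) = vB (1/2)" by (simp add: vA_def vB_def vec_eq_iff forall_3)
lemma vBC: "vB 0 = vC 0" by (simp add: vC_def vB_def vec_eq_iff forall_3)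
lemma vCA: "vC 1 = vA 0" by (simp add: vC_def vA_def vec_eq_iff forall_3)
lemma unifA: "(uniform_dist :: real^3) = vA (1/3)" by (simp add: uniform_dist_def vA_def vec_eq_iff forall_3)

lemma batch_step:
  assumes eta: "eta > 0" and ae: "real alpha * eta \<ge> 2" and a: "0 \<le> a" "a \<le> 1/2"
    and st: "agile_oga eta (hard_rewards alpha) (3*alpha*i) = vA a"
  shows "(\<forall>j\<le>alpha. agile_oga eta (hard_rewards alpha) (3*alpha*i + alpha + j) = vB (max 0 (1/2 - real j * eta / 2)))
     \<and> agile_oga eta (hard_rewards alpha) (3*alpha*Suc i) = vA 0"
proof -
  let ?P = "agile_oga eta (hard_rewards alpha)"
  have "?P (3*alpha*i + alpha) = vA (min (1/2) (a + real alpha * eta / 3))"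
    by (rule phaseA[OF eta a st, where n=alpha and j=alpha]) (auto simp: hrA)
  also have "min (1/2) (a + real alpha * eta / 3) = 1/2" using ae a by auto
  finally have s1: "?P (3*alpha*i + alpha) = vB (1/2)" by (simp add: vAB)
  have B: "\<forall>j\<le>alpha. ?P (3*alpha*i + alpha + j) = vB (max 0 (1/2 - real j * eta / 2))"
  proof (intro allI impI)
    fix j assume "j \<le> alpha"
    then show "?P (3*alpha*i + alpha + j) = vB (max 0 (1/2 - real j * eta / 2))"
      by (intro phaseB[OF eta _ _ s1, where n=alpha]) (auto simp: hrB)
  qed
  have "?P (3*alpha*i + alpha + alpha) = vB (max 0 (1/2 - real alpha * eta / 2))" using B[rule_format, of alpha] by simp
  also have "max 0 (1/2 - real alpha * eta / 2) = 0" using ae by auto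
  finally have s2: "?P (3*alpha*i + alpha + alpha) = vC 0" by (simp add: vBC)
  have "?P (3*alpha*i + alpha + alpha + alpha) = vC (min 1 (0 + real alpha * eta / 2))"
    by (rule phaseC[OF eta _ _ s2, where n=alpha]) (auto simp: hrC')
  also have "min 1 (0 + real alpha * eta / 2) = 1"
  proof -
    have "real alpha * eta / 2 \<ge> 1" using ae by linarith
    then show ?thesis by simp
  qed
  finally have "?P (3*alpha*i + alpha + alpha + alpha) = vA 0" by (simp add: vCA)
  moreover have "3*alpha*Suc i = 3*alpha*i + alpha + alpha + alpha" by simp
  ultimately show ?thesis using B by simp
qed

lemma batch_start:
  assumes eta: "eta > 0" and ae: "real alpha * eta \<ge> 2"
  shows "\<exists>a. 0 \<le> a \<and> a \<le> 1/2 \<and> agile_oga eta (hard_rewards alpha) (3*alpha*i) = vA a"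
proof (induction i)
  case 0
  have "agile_oga eta (hard_rewards alpha) (3*alpha*0) = vA (1/3)" by (simp add: unifA)
  then show ?case by (intro exI[of _ "1/3"]) auto
next
  case (Suc i)
  then obtain a where "0 \<le> a" "a \<le> 1/2" "agile_oga eta (hard_rewards alpha) (3*alpha*i) = vA a" by blast
  from batch_step[OF eta ae this] show ?case by (intro exI[of _ 0]) auto
qed

lemma batchB:
  assumes eta: "eta > 0" and ae: "real alpha * eta \<ge> 2" and "j \<le> alpha"
  shows "agile_oga eta (hard_rewards alpha) (3*alpha*i + alpha + j) = vB (max 0 (1/2 - real j * eta / 2))"
  using batch_start[OF eta ae, of i] batch_step[OF eta ae] assms(3) by blast


theorem mainTheorem10:
  shows "\<exists>c>0. \<forall>(eta::real) (T::nat) (m::nat) (alpha::nat) (beta::nat).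
           eta > 0 \<and> 1 / (2 * eta) = real m \<and> 100 / eta = real alpha
           \<and> eta / 300 * real T = real beta \<and> T > 0 \<longrightarrow>
           swap_regret T (agile_oga eta (hard_rewards alpha)) (hard_rewards alpha) \<ge> c * real T"
proof (intro exI[of _ "1/2400"] conjI allI impI)
  show "(0::real) < 1/2400" by simp
  fix eta :: real and T m alpha beta :: nat
  assume H: "eta > 0 \<and> 1 / (2 * eta) = real m \<and> 100 / eta = real alpha
           \<and> eta / 300 * real T = real beta \<and> T > 0"
  have eta: "eta > 0" using H by blast
  have m0: "real m > 0" using H by (metis divide_pos_pos mult_pos_pos zero_less_numeral zero_less_one)
  have etam: "eta * real m = 1/2" using H eta by (auto simp: field_simps)
  have al: "real alpha = 200 * real m"
  proof -
    have e1: "eta * real alpha = 100" using H eta by (auto simp: field_simps)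
    have "eta * (200 * real m) = 200 * (eta * real m)" by simp
    also have "\<dots> = 100" using etam by simp
    finally have "eta * real alpha = eta * (200 * real m)" using e1 by simp
    then show ?thesis using eta by simp
  qed
  have ae: "real alpha * eta \<ge> 2" using al etam by (simp add: algebra_simps)
  have Tb: "real T = 600 * real m * real beta"
  proof -
    have "eta * real T = 300 * real beta" using H by (auto simp: field_simps)
    then have "real m * (eta * real T) = real m * (300 * real beta)" by simp
    then have "(eta * real m) * real T = 300 * real m * real beta" by (simp add: algebra_simps)
    then show ?thesis using etam by simp
  qed
  have "real T = real (3 * alpha * beta)" using Tb al by simp
  then have Tn: "T = beta * (3 * alpha)" by (simp only: of_nat_eq_iff mult.commute)
  define P where "P = agile_oga eta (hard_rewards alpha)"
  define r where "r = hard_rewards alpha"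
  define g where "g t = P t $ 1 * (r t $ 2 - r t $ 1)" for t
  define phi :: "3 \<Rightarrow> 3" where "phi k = (if k = 1 then 2 else k)" for k
  have F: "(\<Sum>t<T. \<Sum>k\<in>UNIV. P t $ k * (r t $ (phi k) - r t $ k)) = (\<Sum>t<T. g t)"
    by (simp add: sum_3 g_def phi_def)
  have gnn: "g t \<ge> 0" for t
  proof -
    define i where "i = t div (3*alpha)"
    define j where "j = t mod (3*alpha)"
    have tij: "t = 3*alpha*i + j" unfolding i_def j_def by simp
    show ?thesis
    proof (cases "j < alpha \<or> \<not> j < 2*alpha")
      case True
      then have "r t $ 2 - r t $ 1 = 0" unfolding r_def hard_rewards_def j_def by auto
      then show ?thesis by (simp add: g_def)
    next
      case False
      then have rt: "r t $ 2 - r t $ 1 = 1" unfolding r_def hard_rewards_def j_def by auto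
      from False have t2: "t = 3*alpha*i + alpha + (j - alpha)" using tij by simp
      have "P t = vB (max 0 (1/2 - real (j - alpha) * eta / 2))"
        unfolding P_def by (subst t2, rule batchB[OF eta ae]) (use False in linarith)
      then have "P t $ 1 \<ge> 0" by (simp add: vB_def)
      then show ?thesis using rt by (simp add: g_def)
    qed
  qed
  have gB: "g t \<ge> 1/4" if "i*(3*alpha) + alpha \<le> t" "t < i*(3*alpha) + alpha + m" for i t
  proof -
    define j where "j = t - (i*(3*alpha) + alpha)"
    have jm: "j < m" using that unfolding j_def by simp
    have t2: "t = 3*alpha*i + alpha + j" using that unfolding j_def by simp
    have "real m \<le> real alpha" using al m0 by simp
    then have ja: "j \<le> alpha" using jm by linarith
    have "r t = vector [0,1,0]" unfolding r_def t2 by (rule hrB) (use ja jm al in auto)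
    moreover have "P t = vB (max 0 (1/2 - real j * eta / 2))"
      unfolding P_def t2 by (rule batchB[OF eta ae ja])
    moreover have "real j * eta \<le> real m * eta" using jm eta by simp
    ultimately show ?thesis using etam by (simp add: g_def vB_def algebra_simps)
  qed
  have block: "(\<Sum>t\<in>{i*(3*alpha)..<i*(3*alpha)+3*alpha}. g t) \<ge> real m / 4" for i
  proof -
    have "real m / 4 = real (card {i*(3*alpha)+alpha..<i*(3*alpha)+alpha+m}) * (1/4)" by simp
    also have "\<dots> \<le> (\<Sum>t\<in>{i*(3*alpha)+alpha..<i*(3*alpha)+alpha+m}. g t)"
      by (rule sum_bounded_below) (use gB in auto)
    also have "\<dots> \<le> (\<Sum>t\<in>{i*(3*alpha)..<i*(3*alpha)+3*alpha}. g t)"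
    proof (rule sum_mono2)
      have "real m \<le> real alpha" using al m0 by simp
      then have "m \<le> alpha" by linarith
      then show "{i*(3*alpha)+alpha..<i*(3*alpha)+alpha+m} \<subseteq> {i*(3*alpha)..<i*(3*alpha)+3*alpha}"
        by auto
    qed (use gnn in auto)
    finally show ?thesis .
  qed
  have "(\<Sum>t<T. g t) = (\<Sum>i<beta. \<Sum>t\<in>{i*(3*alpha)..<i*(3*alpha)+3*alpha}. g t)"
    unfolding Tn by (rule sum.nat_group[symmetric])
  also have "\<dots> \<ge> (\<Sum>i<beta. real m / 4)" by (rule sum_mono) (rule block)
  finally have S: "(\<Sum>t<T. g t) \<ge> real beta * real m / 4" by simp
  have "1/2400 * real T \<le> (\<Sum>t<T. g t)" using S Tb by (simp add: algebra_simps)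
  also have "\<dots> \<le> swap_regret T P r"
    unfolding swap_regret_def F[symmetric]
    by (rule Max_ge) auto
  finally show "1/2400 * real T \<le> swap_regret T (agile_oga eta (hard_rewards alpha)) (hard_rewards alpha)"
    by (simp add: P_def r_def)
qed

end
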